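(* Let $\mathcal{P}=(\{\mathcal{E}_k:k\in K\},\{M_0,M_1\})$ be a concurrent quantum program with $K=\{1,\dots,m\}$ on a Hilbert space $\mathcal{H}$ of finite dimension $d$, with initial density operator $\rho_0$. Let $\mathcal{G}=\sum_{i=0}^{d-1}\big(\sum_{k=1}^m\mathcal{F}_k\big)^i$ and, for each permutation $p=p_1p_2\cdots p_m\in P_K$, let $\mathcal{F}_p'=\mathcal{F}_{p_m}\circ\mathcal{G}\circ\mathcal{F}_{p_{m-1}}\circ\cdots\circ\mathcal{F}_{p_2}\circ\mathcal{G}\circ\mathcal{F}_{p_1}$. Let $M$ be the matrix representation of $\sum_{p\in P_K}\mathcal{F}'_p$. Then $\mathcal{P}$ with input $\rho_0$ terminates in the fair schedule $F$ if and only if $M^d(\rho_0\otimes I)|\Phi\rangle=0$, equivalently iff $\big(\sum_{p\in P_K}\mathcal{F}'_p\big)^d(\rho_0)=0$.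
   Context: $\mathcal{H}$ is a complex Hilbert space of finite dimension $d\ge1$ with orthonormal basis $\{|j\rangle\}$, and $|\Phi\rangle=\sum_j|j\rangle|j\rangle$. A super-operator is a completely positive trace-non-increasing linear map on operators on $\mathcal{H}$, with Kraus form $\mathcal{E}(\rho)=\sum_iE_i\rho E_i^\dagger$; its matrix representation is $\sum_iE_i\otimes E_i^*$ ($E^*$ entrywise complex conjugate), and for any CP linear map written in Kraus form the same definition applies. A concurrent quantum program is $\mathcal{P}=(\{\mathcal{E}_k:k\in K\},\{M_0,M_1\})$ with trace-preserving super-operators $\mathcal{E}_k$ and $M_0^\dagger M_0+M_1^\dagger M_1=I$. $\mathcal{F}_k(\rho)=\mathcal{E}_k(M_1\rho M_1^\dagger)$; for a finite string $f=s_1\cdots s_n$, $\mathcal{F}_f=\mathcal{F}_{s_n}\circ\cdots\circ\mathcal{F}_{s_1}$; powers denote iterated composition, the $0$th power the identity. For $s\in K^\omega$, $s[n]$ is its length-$n$ prefix. $\mathcal{P}$ with input $\rho_0$ terminates in a schedule $A\subseteq K^\omega$ if for every $s\in A$ there is $n\ge1$ with $\mathcal{F}_{s[n]}(\rho_0)=0$. $F$ is the set of infinite paths in which every $k\in K$ occurs infinitely often. $P_K$ is the set of permutations of $K$ as strings of length $m$. *)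

theory Defs
  imports "HOL-Analysis.Analysis"
begin

text \<open>Operators on the d-dimensional Hilbert space H are complex matrices indexed by a
  finite type 'n, so d = CARD('n).\<close>

type_synonym 'n op = "complex ^'n ^'n"

definition adj :: "'n::finite op \<Rightarrow> 'n op" where
  "adj A = (\<chi> i j. cnj (A $ j $ i))"

definition conj_mat :: "'n::finite op \<Rightarrow> 'n op" where
  "conj_mat A = (\<chi> i j. cnj (A $ i $ j))"

definition mtrace :: "'n::finite op \<Rightarrow> complex" where
  "mtrace A = (\<Sum>i\<in>UNIV. A $ i $ i)"

definition density_op :: "'n::finite op \<Rightarrow> bool" where
  "density_op \<rho> \<longleftrightarrow>
     (\<forall>v::complex^'n. \<exists>r::real. r \<ge> 0 \<and>
        (\<Sum>i\<in>UNIV. \<Sum>j\<in>UNIV. cnj (v $ i) * \<rho> $ i $ j * v $ j) = complex_of_real r)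
     \<and> mtrace \<rho> = 1"

definition kron :: "'n::finite op \<Rightarrow> 'n op \<Rightarrow> complex ^('n \<times> 'n) ^('n \<times> 'n)" where
  "kron A B = (\<chi> ij kl. A $ fst ij $ fst kl * B $ snd ij $ snd kl)"

definition Phi :: "complex ^('n::finite \<times> 'n)" where
  "Phi = (\<chi> ij. if fst ij = snd ij then 1 else 0)"

primrec matpow :: "'m::finite op \<Rightarrow> nat \<Rightarrow> 'm op" where
  "matpow A 0 = mat 1"
| "matpow A (Suc n) = A ** matpow A n"

text \<open>Super-operators in Kraus form (list of Kraus operators).\<close>
definition apply_kraus :: "'n::finite op list \<Rightarrow> 'n op \<Rightarrow> 'n op" where
  "apply_kraus L \<rho> = sum_list (map (\<lambda>E. E ** \<rho> ** adj E) L)"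

definition trace_preserving :: "'n::finite op list \<Rightarrow> bool" where
  "trace_preserving L \<longleftrightarrow> sum_list (map (\<lambda>E. adj E ** E) L) = mat 1"

definition matrep :: "'n::finite op list \<Rightarrow> complex ^('n \<times> 'n) ^('n \<times> 'n)" where
  "matrep L = sum_list (map (\<lambda>E. kron E (conj_mat E)) L)"

text \<open>Kraus form of composition (A after B), and of sums (concatenation).\<close>
definition kraus_comp :: "'n::finite op list \<Rightarrow> 'n op list \<Rightarrow> 'n op list" where
  "kraus_comp A B = concat (map (\<lambda>b. map (\<lambda>a. a ** b) A) B)"

primrec kraus_pow :: "'n::finite op list \<Rightarrow> nat \<Rightarrow> 'n op list" where
  "kraus_pow A 0 = [mat 1]"
| "kraus_pow A (Suc n) = kraus_comp A (kraus_pow A n)"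

text \<open>Process set K = {1..m}; Es k = Kraus operators of E_k; M1 the measurement
  operator for continuing the loop.\<close>

definition Fk :: "(nat \<Rightarrow> 'n::finite op list) \<Rightarrow> 'n op \<Rightarrow> nat \<Rightarrow> 'n op \<Rightarrow> 'n op" where
  "Fk Es M1 k \<rho> = apply_kraus (Es k) (M1 ** \<rho> ** adj M1)"

primrec Fpath :: "(nat \<Rightarrow> 'n::finite op list) \<Rightarrow> 'n op \<Rightarrow> (nat \<Rightarrow> nat) \<Rightarrow> nat \<Rightarrow> 'n op \<Rightarrow> 'n op" where
  "Fpath Es M1 s 0 = id"
| "Fpath Es M1 s (Suc n) = Fk Es M1 (s n) \<circ> Fpath Es M1 s n"

definition terminates_in :: "(nat \<Rightarrow> 'n::finite op list) \<Rightarrow> 'n op \<Rightarrow> 'n op \<Rightarrow> (nat \<Rightarrow> nat) set \<Rightarrow> bool" where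
  "terminates_in Es M1 \<rho>0 A \<longleftrightarrow> (\<forall>s\<in>A. \<exists>n\<ge>1. Fpath Es M1 s n \<rho>0 = 0)"

definition fair_paths :: "nat set \<Rightarrow> (nat \<Rightarrow> nat) set" where
  "fair_paths K = {s. (\<forall>n. s n \<in> K) \<and> (\<forall>k\<in>K. infinite {n. s n = k})}"

definition perms :: "nat set \<Rightarrow> nat list set" where
  "perms K = {p. distinct p \<and> set p = K}"

definition Gop :: "(nat \<Rightarrow> 'n::finite op list) \<Rightarrow> 'n op \<Rightarrow> nat set \<Rightarrow> 'n op \<Rightarrow> 'n op" where
  "Gop Es M1 K \<rho> = (\<Sum>i<CARD('n). ((\<lambda>\<sigma>. \<Sum>k\<in>K. Fk Es M1 k \<sigma>) ^^ i) \<rho>)"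

fun Fprime :: "(nat \<Rightarrow> 'n::finite op list) \<Rightarrow> 'n op \<Rightarrow> nat set \<Rightarrow> nat list \<Rightarrow> 'n op \<Rightarrow> 'n op" where
  "Fprime Es M1 K [] = id"
| "Fprime Es M1 K [x] = Fk Es M1 x"
| "Fprime Es M1 K (x # y # r) = Fprime Es M1 K (y # r) \<circ> Gop Es M1 K \<circ> Fk Es M1 x"

definition SumFprime :: "(nat \<Rightarrow> 'n::finite op list) \<Rightarrow> 'n op \<Rightarrow> nat set \<Rightarrow> 'n op \<Rightarrow> 'n op" where
  "SumFprime Es M1 K \<rho> = (\<Sum>p\<in>perms K. Fprime Es M1 K p \<rho>)"

definition kraus_F :: "(nat \<Rightarrow> 'n::finite op list) \<Rightarrow> 'n op \<Rightarrow> nat \<Rightarrow> 'n op list" where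
  "kraus_F Es M1 k = map (\<lambda>E. E ** M1) (Es k)"

definition kraus_G :: "(nat \<Rightarrow> 'n::finite op list) \<Rightarrow> 'n op \<Rightarrow> nat list \<Rightarrow> 'n op list" where
  "kraus_G Es M1 ks = concat (map (\<lambda>i. kraus_pow (concat (map (kraus_F Es M1) ks)) i) [0..<CARD('n)])"

fun kraus_Fprime :: "(nat \<Rightarrow> 'n::finite op list) \<Rightarrow> 'n op \<Rightarrow> nat list \<Rightarrow> nat list \<Rightarrow> 'n op list" where
  "kraus_Fprime Es M1 ks [] = [mat 1]"
| "kraus_Fprime Es M1 ks [x] = kraus_F Es M1 x"
| "kraus_Fprime Es M1 ks (x # y # r) =
     kraus_comp (kraus_Fprime Es M1 ks (y # r)) (kraus_comp (kraus_G Es M1 ks) (kraus_F Es M1 x))"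

text \<open>Matrix representation of \<Sum>_{p\<in>P_K} F'_p (Kraus form = concatenation of the
  Kraus forms of the summands, so the representation is the sum).\<close>
definition Mrep :: "(nat \<Rightarrow> 'n::finite op list) \<Rightarrow> 'n op \<Rightarrow> nat \<Rightarrow> complex ^('n \<times> 'n) ^('n \<times> 'n)" where
  "Mrep Es M1 m = (\<Sum>p\<in>perms {1..m}. matrep (kraus_Fprime Es M1 [1..<m+1] p))"

end

theory Submission
  imports Defs
begin


definition cinner :: "complex^'n::finite \<Rightarrow> complex^'n \<Rightarrow> complex" where
  "cinner u w = (\<Sum>i\<in>UNIV. cnj (u$i) * w$i)"

definition qf :: "'n::finite op \<Rightarrow> complex^'n \<Rightarrow> complex" where
  "qf X v = cinner v (X *v v)"

definition psd :: "'n::finite op \<Rightarrow> bool" where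
  "psd X \<longleftrightarrow> (\<forall>v. Im (qf X v) = 0 \<and> Re (qf X v) \<ge> 0)"

definition Zs :: "'n::finite op \<Rightarrow> (complex^'n) set" where
  "Zs X = {v. qf X v = 0}"

lemma adj_adj[simp]: "adj (adj A) = A"
  by (simp add: adj_def vec_eq_iff)

lemma cinner_adj: "cinner u (A *v w) = cinner (adj A *v u) w"
proof -
  have "cinner u (A *v w) = (\<Sum>i\<in>UNIV. \<Sum>j\<in>UNIV. cnj (u$i) * (A$i$j * w$j))"
    by (simp add: cinner_def matrix_vector_mult_def sum_distrib_left)
  also have "\<dots> = (\<Sum>j\<in>UNIV. \<Sum>i\<in>UNIV. cnj (u$i) * (A$i$j * w$j))"
    by (rule sum.swap)
  also have "\<dots> = cinner (adj A *v u) w"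
    by (simp add: cinner_def matrix_vector_mult_def adj_def sum_distrib_right sum_distrib_left mult_ac)
  finally show ?thesis .
qed

lemma cinner_add_right: "cinner u (w1 + w2) = cinner u w1 + cinner u w2"
  by (simp add: cinner_def distrib_left sum.distrib)
lemma cinner_add_left: "cinner (u1 + u2) w = cinner u1 w + cinner u2 w"
  by (simp add: cinner_def distrib_right sum.distrib)
lemma cinner_scale_right: "cinner u (c *s w) = c * cinner u w"
  by (simp add: cinner_def sum_distrib_left mult_ac)
lemma cinner_scale_left: "cinner (c *s u) w = cnj c * cinner u w"
  by (simp add: cinner_def sum_distrib_left mult_ac)
lemma cinner_zero_right[simp]: "cinner u 0 = 0"
  by (simp add: cinner_def)

lemma qf_add_mat: "qf (X + Y) v = qf X v + qf Y v"
  by (simp add: qf_def matrix_vector_mult_add_rdistrib cinner_add_right)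

lemma qf_zero_mat[simp]: "qf 0 v = 0"
  by (simp add: qf_def)

lemma qf_sum_list: "qf (sum_list (map f L)) v = sum_list (map (\<lambda>E. qf (f E) v) L)"
  by (induction L) (auto simp: qf_add_mat)

lemma qf_sum: "qf (sum f S) v = (\<Sum>x\<in>S. qf (f x) v)"
  by (induction S rule: infinite_finite_induct) (auto simp: qf_add_mat)

lemma qf_congr: "qf (E ** X ** adj E) v = qf X (adj E *v v)"
  unfolding qf_def
  by (simp add: matrix_vector_mul_assoc[symmetric] cinner_adj)

lemma qf_expand:
  "qf X (v + c *s w) = qf X v + c * cinner v (X *v w) + cnj c * cinner w (X *v v)
      + cnj c * c * qf X w"
proof -
  have "X *v (v + c *s w) = X *v v + c *s (X *v w)"
    by (simp add: matrix_vector_right_distrib vector_scalar_commute)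
  then show ?thesis unfolding qf_def
    by (simp add: cinner_add_left cinner_add_right cinner_scale_left cinner_scale_right
        distrib_left distrib_right mult.assoc)
qed

lemma real_quad_zero:
  fixes c q :: real
  assumes q: "q \<ge> 0" and h: "\<And>t. t * c + t^2 * q \<ge> 0"
  shows "c = 0"
proof -
  define t where "t = - c / (q + 1)"
  have tq: "t * (q+1) = - c" using q by (simp add: t_def)
  have "t * c + t^2 * q \<ge> 0" by (rule h)
  moreover have "t * c + t^2 * q = - (t^2)"
  proof -
    have "t * c + t^2 * q = t * (c + t * (q+1)) - t^2" by (simp add: algebra_simps power2_eq_square)
    also have "\<dots> = - (t^2)" using tq by (simp add: mult.commute)
    finally show ?thesis .
  qed
  ultimately have "t = 0" by simp
  then show ?thesis using tq by simp
qed

lemma cinner_axis: "cinner (axis i 1) y = y $ i"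
proof -
  have "cinner (axis i 1) y = (\<Sum>j\<in>UNIV. if j = i then y$j else 0)"
    unfolding cinner_def axis_def by (rule sum.cong) auto
  then show ?thesis by simp
qed

lemma psd_kernel:
  assumes X: "psd X" and z: "qf X v = 0"
  shows "X *v v = 0"
proof -
  have main: "cinner w (X *v v) = 0" for w
  proof -
    define a where "a = cinner w (X *v v)"
    define b where "b = cinner v (X *v w)"
    define q where "q = qf X w"
    have qr: "Im q = 0" "Re q \<ge> 0" using X unfolding psd_def q_def by auto
    have e1: "qf X (v + complex_of_real t *s w) = complex_of_real t * (a + b) + complex_of_real (t^2) * q" for t
      using qf_expand[of X v "complex_of_real t" w] z
      by (simp add: a_def b_def q_def algebra_simps power2_eq_square)
    have e2: "qf X (v + (\<i> * complex_of_real t) *s w) = \<i> * complex_of_real t * (b - a) + complex_of_real (t^2) * q" for t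
      using qf_expand[of X v "\<i> * complex_of_real t" w] z
      by (simp add: a_def b_def q_def algebra_simps power2_eq_square)
    have p1: "t * Re (a + b) + t^2 * Re q \<ge> 0" for t
    proof -
      have "Re (qf X (v + complex_of_real t *s w)) \<ge> 0" using X unfolding psd_def by auto
      then show ?thesis using qr by (simp add: e1)
    qed
    have p2: "t * (- Im (b - a)) + t^2 * Re q \<ge> 0" for t
    proof -
      have "Re (qf X (v + (\<i> * complex_of_real t) *s w)) \<ge> 0" using X unfolding psd_def by auto
      then show ?thesis using qr by (simp add: e2 right_diff_distrib)
    qed
    have i1: "Im (a + b) = 0"
    proof -
      have "Im (qf X (v + complex_of_real 1 *s w)) = 0" using X unfolding psd_def by auto
      then show ?thesis using qr e1[of 1] by simp
    qed
    have i2: "Re (b - a) = 0"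
    proof -
      have "Im (qf X (v + (\<i> * complex_of_real 1) *s w)) = 0" using X unfolding psd_def by auto
      then show ?thesis using qr e2[of 1] by simp
    qed
    have r1: "Re (a + b) = 0" using real_quad_zero[OF qr(2) p1] .
    have r2: "Im (b - a) = 0" using real_quad_zero[OF qr(2) p2] by simp
    show ?thesis using i1 i2 r1 r2 unfolding a_def[symmetric]
      by (simp add: complex_eq_iff)
  qed
  show ?thesis
    unfolding vec_eq_iff by (metis main cinner_axis zero_index)
qed

lemma qf_psd_cases: "psd X \<Longrightarrow> qf X v = complex_of_real (Re (qf X v)) \<and> Re (qf X v) \<ge> 0"
  unfolding psd_def by (simp add: complex_eq_iff)

lemma psd_zero[simp]: "psd 0"
  by (simp add: psd_def)

lemma psd_add: "psd X \<Longrightarrow> psd Y \<Longrightarrow> psd (X + Y)"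
  by (simp add: psd_def qf_add_mat)

lemma psd_sum: "(\<And>x. x \<in> S \<Longrightarrow> psd (f x)) \<Longrightarrow> psd (sum f S)"
  by (induction S rule: infinite_finite_induct) (auto intro: psd_add)

lemma psd_sum_list: "(\<And>x. x \<in> set L \<Longrightarrow> psd (f x)) \<Longrightarrow> psd (sum_list (map f L))"
  by (induction L) (auto intro: psd_add)

lemma psd_congr: "psd X \<Longrightarrow> psd (E ** X ** adj E)"
  by (simp add: psd_def qf_congr)

lemma apply_kraus_psd: "psd X \<Longrightarrow> psd (apply_kraus L X)"
  unfolding apply_kraus_def by (rule psd_sum_list) (simp add: psd_congr)

lemma Zs_add: "psd X \<Longrightarrow> psd Y \<Longrightarrow> Zs (X + Y) = Zs X \<inter> Zs Y"
  unfolding Zs_def psd_def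
  by (auto simp: qf_add_mat complex_eq_iff) (smt (verit))+

lemma Zs_zero[simp]: "Zs 0 = UNIV"
  by (simp add: Zs_def)

lemma Zs_sum: "finite S \<Longrightarrow> (\<And>x. x \<in> S \<Longrightarrow> psd (f x)) \<Longrightarrow> Zs (sum f S) = (\<Inter>x\<in>S. Zs (f x))"
proof (induction S rule: finite_induct)
  case (insert x F)
  then show ?case by (simp add: Zs_add psd_sum)
qed simp

lemma Zs_sum_list: "(\<And>x. x \<in> set L \<Longrightarrow> psd (f x)) \<Longrightarrow> Zs (sum_list (map f L)) = (\<Inter>x\<in>set L. Zs (f x))"
proof (induction L)
  case (Cons a L)
  then show ?case by (simp add: Zs_add psd_sum_list)
qed simp

lemma Zs_congr: "Zs (E ** X ** adj E) = {v. adj E *v v \<in> Zs X}"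
  by (simp add: Zs_def qf_congr)

lemma Zs_apply_kraus: "psd X \<Longrightarrow> Zs (apply_kraus L X) = {v. \<forall>E\<in>set L. adj E *v v \<in> Zs X}"
  unfolding apply_kraus_def
  by (subst Zs_sum_list) (auto simp: psd_congr Zs_congr)

lemma Zs_kernel: "psd X \<Longrightarrow> Zs X = {v. X *v v = 0}"
  unfolding Zs_def using psd_kernel by (auto simp: qf_def)

lemma Zs_subspace: "psd X \<Longrightarrow> vec.subspace (Zs X)"
  by (simp add: Zs_kernel vec.subspace_kernel)

lemma Zs_UNIV_iff: "psd X \<Longrightarrow> Zs X = UNIV \<longleftrightarrow> X = 0"
proof
  assume X: "psd X" and "Zs X = UNIV"
  then have "X *v v = 0" for v by (auto simp: Zs_kernel)
  then have "X *v axis j 1 = 0" for j by blast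
  then show "X = 0"
    by (simp add: vec_eq_iff matrix_vector_mult_def axis_def if_distrib cong: if_cong)
qed simp

(* Kraus algebra *)

lemma matrix_add_rdistrib': "(B + C) ** A = B ** A + C ** (A :: 'a::semiring_1^'n::finite^'m::finite)"
  by (simp add: matrix_matrix_mult_def vec_eq_iff distrib_right sum.distrib)

lemma times0_left': "(0::'a::semiring_1^'n::finite^'m::finite) ** A = 0"
  by (simp add: matrix_matrix_mult_def vec_eq_iff)


lemma apply_kraus_Nil[simp]: "apply_kraus [] X = 0"
  by (simp add: apply_kraus_def)

lemma adj_mat1[simp]: "adj (mat 1) = mat 1"
  by (simp add: adj_def mat_def vec_eq_iff)

lemma apply_kraus_id[simp]: "apply_kraus [mat 1] X = X"
  by (simp add: apply_kraus_def)

lemma apply_kraus_append: "apply_kraus (A @ B) X = apply_kraus A X + apply_kraus B X"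
  by (simp add: apply_kraus_def)

lemma apply_kraus_add: "apply_kraus L (X + Y) = apply_kraus L X + apply_kraus L Y"
  by (induction L) (auto simp: apply_kraus_def matrix_add_ldistrib matrix_add_rdistrib')

lemma apply_kraus_zero[simp]: "apply_kraus L 0 = 0"
  by (induction L) (auto simp: apply_kraus_def times0_left')

lemma apply_kraus_sum_list: "apply_kraus L (sum_list (map f xs)) = sum_list (map (\<lambda>x. apply_kraus L (f x)) xs)"
  by (induction xs) (auto simp: apply_kraus_add)

lemma apply_kraus_concat: "apply_kraus (concat Ls) X = sum_list (map (\<lambda>L. apply_kraus L X) Ls)"
  by (induction Ls) (auto simp: apply_kraus_append apply_kraus_def)

lemma adj_mult: "adj (A ** B) = adj B ** adj A"
  by (simp add: adj_def matrix_matrix_mult_def vec_eq_iff mult.commute)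

lemma apply_kraus_comp: "apply_kraus (kraus_comp A B) X = apply_kraus A (apply_kraus B X)"
proof -
  have "apply_kraus (kraus_comp A B) X = sum_list (map (\<lambda>b. apply_kraus A (b ** X ** adj b)) B)"
    unfolding kraus_comp_def apply_kraus_concat
    by (simp add: apply_kraus_def o_def adj_mult matrix_mul_assoc)
  also have "\<dots> = apply_kraus A (apply_kraus B X)"
    by (simp add: apply_kraus_def[of B] apply_kraus_sum_list)
  finally show ?thesis .
qed

definition cp :: "('n::finite op \<Rightarrow> 'n op) \<Rightarrow> bool" where
  "cp f \<longleftrightarrow> (\<exists>L. f = apply_kraus L)"

lemma cp_id: "cp (\<lambda>X. X)"
  unfolding cp_def by (rule exI[of _ "[mat 1]"]) auto

lemma cp_id': "cp id"
  using cp_id by (simp add: id_def)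

lemma cp_comp: "cp f \<Longrightarrow> cp g \<Longrightarrow> cp (f \<circ> g)"
proof -
  assume "cp f" "cp g"
  then obtain L1 L2 where "f = apply_kraus L1" "g = apply_kraus L2" unfolding cp_def by blast
  then have "f \<circ> g = apply_kraus (kraus_comp L1 L2)" by (simp add: fun_eq_iff apply_kraus_comp)
  then show ?thesis unfolding cp_def by blast
qed

lemma cp_comp': "cp f \<Longrightarrow> cp g \<Longrightarrow> cp (\<lambda>x. f (g x))"
  using cp_comp[of f g] by (simp add: o_def)

lemma cp_add: "cp f \<Longrightarrow> cp g \<Longrightarrow> cp (\<lambda>X. f X + g X)"
proof -
  assume "cp f" "cp g"
  then obtain L1 L2 where "f = apply_kraus L1" "g = apply_kraus L2" unfolding cp_def by blast
  then have "(\<lambda>X. f X + g X) = apply_kraus (L1 @ L2)" by (simp add: fun_eq_iff apply_kraus_append)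
  then show ?thesis unfolding cp_def by blast
qed

lemma cp_zero: "cp (\<lambda>X. 0)"
  unfolding cp_def by (auto intro!: exI[of _ "[]"] simp: fun_eq_iff)

lemma cp_sum: "(\<And>i. i \<in> S \<Longrightarrow> cp (f i)) \<Longrightarrow> cp (\<lambda>X. \<Sum>i\<in>S. f i X)"
proof (induction S rule: infinite_finite_induct)
  case (infinite A) then show ?case by (simp add: cp_zero)
next
  case empty then show ?case by (simp add: cp_zero)
next
  case (insert x F) then show ?case by (simp add: cp_add)
qed

lemma cp_pow: "cp f \<Longrightarrow> cp (f ^^ n)"
  by (induction n) (auto simp: cp_id' cp_comp)

lemma cp_add_apply: "cp f \<Longrightarrow> f (X + Y) = f X + f Y"
  unfolding cp_def by (auto simp: apply_kraus_add)

lemma cp_zero_apply: "cp f \<Longrightarrow> f 0 = 0"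
  unfolding cp_def by auto

lemma cp_sum_apply: "cp f \<Longrightarrow> f (\<Sum>i\<in>S. g i) = (\<Sum>i\<in>S. f (g i))"
  by (induction S rule: infinite_finite_induct) (auto simp: cp_add_apply cp_zero_apply)

lemma cp_psd: "cp f \<Longrightarrow> psd X \<Longrightarrow> psd (f X)"
  unfolding cp_def by (auto simp: apply_kraus_psd)

lemma cp_Zs_mono: "cp f \<Longrightarrow> psd X \<Longrightarrow> psd Y \<Longrightarrow> Zs X \<subseteq> Zs Y \<Longrightarrow> Zs (f X) \<subseteq> Zs (f Y)"
  unfolding cp_def by (auto simp: Zs_apply_kraus; blast)

lemma cp_Zs_eq: "cp f \<Longrightarrow> psd X \<Longrightarrow> psd Y \<Longrightarrow> Zs X = Zs Y \<Longrightarrow> Zs (f X) = Zs (f Y)"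
  using cp_Zs_mono[of f X Y] cp_Zs_mono[of f Y X] by auto

lemma apply_kraus_F: "apply_kraus (kraus_F Es M1 k) X = Fk Es M1 k X"
  unfolding kraus_F_def Fk_def apply_kraus_def
  by (simp add: o_def adj_mult matrix_mul_assoc)

lemma cp_Fk: "cp (Fk Es M1 k)"
  unfolding cp_def by (rule exI[of _ "kraus_F Es M1 k"]) (simp add: apply_kraus_F fun_eq_iff)

definition Fsum :: "(nat \<Rightarrow> 'n::finite op list) \<Rightarrow> 'n op \<Rightarrow> nat set \<Rightarrow> 'n op \<Rightarrow> 'n op" where
  "Fsum Es M1 K = (\<lambda>\<sigma>. \<Sum>k\<in>K. Fk Es M1 k \<sigma>)"

lemma cp_Fsum: "cp (Fsum Es M1 K)"
  unfolding Fsum_def by (rule cp_sum) (rule cp_Fk)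

lemma Gop_Fsum: "Gop Es M1 K \<sigma> = (\<Sum>i<CARD('n). (Fsum Es M1 K ^^ i) \<sigma>)"
  for \<sigma> :: "'n::finite op"
  unfolding Gop_def Fsum_def by simp

lemma cp_Gop: "cp (Gop Es M1 K)"
proof -
  have "Gop Es M1 K = (\<lambda>\<sigma>. \<Sum>i<CARD('a). (Fsum Es M1 K ^^ i) \<sigma>)"
    by (simp add: Gop_Fsum fun_eq_iff)
  then show ?thesis by (simp add: cp_sum cp_pow cp_Fsum)
qed

lemma cp_Fprime: "cp (Fprime Es M1 K p)"
proof (induction Es M1 K p rule: Fprime.induct)
  case (3 Es M1 K x y r)
  then have "cp (Fprime Es M1 K (y # r))" by blast
  from cp_comp'[OF this cp_comp'[OF cp_Gop[of Es M1 K] cp_Fk[of Es M1 x]]]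
  show ?case by (simp add: o_def)
qed (auto simp: cp_id cp_Fk)

lemma cp_SumFprime: "cp (SumFprime Es M1 K)"
proof -
  have "SumFprime Es M1 K = (\<lambda>\<sigma>. \<Sum>p\<in>perms K. Fprime Es M1 K p \<sigma>)"
    by (simp add: SumFprime_def fun_eq_iff)
  then show ?thesis by (simp add: cp_sum cp_Fprime)
qed

lemma cp_Fpath: "cp (Fpath Es M1 s n)"
proof (induction n)
  case (Suc n) from cp_comp'[OF cp_Fk Suc] show ?case by (simp add: o_def)
qed (simp add: cp_id)

(* stabilization of decreasing chains of subspaces *)

lemma chain_stab:
  fixes V :: "nat \<Rightarrow> (complex^'n::finite) set"
  assumes sub: "\<And>j. vec.subspace (V j)"
    and decr: "\<And>j. V (Suc j) \<subseteq> V j"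
    and prp: "\<And>j. V j = V (Suc j) \<Longrightarrow> V (Suc j) = V (Suc (Suc j))"
    and n: "n \<ge> vec.dim (V 0)"
  shows "V n = V (vec.dim (V 0))"
proof -
  define N where "N = vec.dim (V 0)"
  have stable: "V (j + k) = V j" if h: "V j = V (Suc j)" for j k
  proof -
    have P: "V (j + i) = V (Suc (j + i))" for i
      by (induction i) (use h prp in auto)
    show ?thesis by (induction k) (use P in auto)
  qed
  have dimdec: "(\<forall>j<n. V j \<noteq> V (Suc j)) \<Longrightarrow> vec.dim (V n) + n \<le> vec.dim (V 0)" for n
  proof (induction n)
    case (Suc n)
    then have ne: "V n \<noteq> V (Suc n)" by simp
    have "vec.dim (V (Suc n)) < vec.dim (V n)"
    proof (rule ccontr)
      assume "\<not> vec.dim (V (Suc n)) < vec.dim (V n)"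
      then have "V (Suc n) = V n"
        by (intro vec.subspace_dim_equal sub decr) simp
      with ne show False by simp
    qed
    with Suc show ?case by simp
  qed simp
  obtain j where j: "j \<le> N" "V j = V (Suc j)"
  proof (rule ccontr)
    assume "\<not> thesis"
    with that have "\<forall>j<Suc N. V j \<noteq> V (Suc j)" by (meson less_Suc_eq_le)
    from dimdec[OF this] show False by (simp add: N_def)
  qed
  have "V n = V j" using stable[OF j(2), of "n - j"] j n N_def by simp
  moreover have "V N = V j" using stable[OF j(2), of "N - j"] j by simp
  ultimately show ?thesis by (simp add: N_def)
qed

lemma dim_Zs_less: "psd X \<Longrightarrow> X \<noteq> 0 \<Longrightarrow> vec.dim (Zs X) < CARD('n)"
  for X :: "'n::finite op"
proof (rule ccontr)
  assume X: "psd X" "X \<noteq> 0" and "\<not> vec.dim (Zs X) < CARD('n)"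
  moreover have "vec.dim (UNIV :: (complex^'n) set) = CARD('n)" by (rule vec_dim_card)
  ultimately have "vec.dim (UNIV :: (complex^'n) set) \<le> vec.dim (Zs X)" by linarith
  then have "Zs X = UNIV"
    by (intro vec.subspace_dim_equal Zs_subspace X vec.subspace_UNIV) auto
  with X Zs_UNIV_iff show False by blast
qed

lemma psd_pow: "cp f \<Longrightarrow> psd X \<Longrightarrow> psd ((f ^^ n) X)"
  by (induction n) (auto simp: cp_psd)

lemma cp_pow_zero: "cp f \<Longrightarrow> (f ^^ n) 0 = 0"
  by (induction n) (auto simp: cp_zero_apply)

lemma G_stab:
  fixes \<sigma> :: "'n::finite op"
  assumes f: "cp f" and \<sigma>: "psd \<sigma>"
  shows "Zs (\<Sum>i<CARD('n). (f ^^ i) \<sigma>) \<subseteq> Zs ((f ^^ n) \<sigma>)"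
proof (cases "\<sigma> = 0")
  case True then show ?thesis by (simp add: cp_pow_zero f)
next
  case False
  define S where "S k = (\<Sum>i<Suc k. (f ^^ i) \<sigma>)" for k
  define W where "W k = Zs (S k)" for k
  have psdS: "psd (S k)" for k unfolding S_def by (rule psd_sum) (simp add: psd_pow f \<sigma>)
  have Ssuc: "S (Suc k) = \<sigma> + f (S k)" for k
  proof -
    have "S (Suc k) = \<sigma> + (\<Sum>i<Suc k. (f ^^ Suc i) \<sigma>)"
      unfolding S_def by (subst sum.lessThan_Suc_shift) simp
    also have "(\<Sum>i<Suc k. (f ^^ Suc i) \<sigma>) = f (S k)"
    proof -
      have "f (S k) = (\<Sum>i<Suc k. f ((f^^i) \<sigma>))" unfolding S_def by (rule cp_sum_apply[OF f])
      then show ?thesis by simp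
    qed
    finally show ?thesis .
  qed
  have Ssuc2: "S (Suc k) = S k + (f ^^ Suc k) \<sigma>" for k
    unfolding S_def by simp
  have sub: "vec.subspace (W j)" for j unfolding W_def by (rule Zs_subspace[OF psdS])
  have decr: "W (Suc j) \<subseteq> W j" for j
    unfolding W_def Ssuc2 by (subst Zs_add) (auto simp: psdS psd_pow f \<sigma> cp_psd)
  have prp: "W (Suc j) = W (Suc (Suc j))" if "W j = W (Suc j)" for j
  proof -
    have "Zs (f (S j)) = Zs (f (S (Suc j)))"
      using cp_Zs_eq[OF f psdS psdS] that unfolding W_def by blast
    moreover have "W (Suc i) = Zs \<sigma> \<inter> Zs (f (S i))" for i
      unfolding W_def Ssuc[of i] by (simp add: Zs_add \<sigma> cp_psd f psdS)
    ultimately show ?thesis by metis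
  qed
  have d0: "vec.dim (W 0) < CARD('n)"
    unfolding W_def S_def using dim_Zs_less[OF \<sigma> False] by simp
  have Wst: "W m = W (vec.dim (W 0))" if "m \<ge> vec.dim (W 0)" for m
    by (rule chain_stab[OF sub decr prp that])
  define m where "m = max n (CARD('n) - 1)"
  have "W (CARD('n) - 1) = W m"
    using Wst[of "CARD('n) - 1"] Wst[of m] d0 by (simp add: m_def)
  moreover have "W m \<subseteq> Zs ((f ^^ n) \<sigma>)"
    unfolding W_def S_def
    by (subst Zs_sum) (auto simp: psd_pow f \<sigma> m_def less_Suc_eq_le)
  moreover have "(\<Sum>i<CARD('n). (f ^^ i) \<sigma>) = S (CARD('n) - 1)"
    unfolding S_def by simp
  ultimately show ?thesis unfolding W_def by simp
qed

primrec Rch :: "'n::finite op list \<Rightarrow> nat \<Rightarrow> (complex^'n) set" where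
  "Rch L 0 = UNIV"
| "Rch L (Suc n) = vec.span {adj E *v y | E y. E \<in> set L \<and> y \<in> Rch L n}"

lemma Rch_subspace: "vec.subspace (Rch L n)"
  by (cases n) (auto simp: vec.subspace_UNIV vec.subspace_span)

lemma Rch_decr: "Rch L (Suc n) \<subseteq> Rch L n"
proof (induction n)
  case 0 then show ?case by simp
next
  case (Suc n)
  then show ?case by (simp only: Rch.simps) (rule vec.span_mono, blast)
qed

lemma Rch_antimono: "m \<le> n \<Longrightarrow> Rch L n \<subseteq> Rch L m"
  by (induction n rule: dec_induct) (use Rch_decr in blast)+

lemma Rch_key: "psd \<sigma> \<Longrightarrow> Zs ((apply_kraus L ^^ n) \<sigma>) = UNIV \<longleftrightarrow> Rch L n \<subseteq> Zs \<sigma>"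
proof (induction n arbitrary: \<sigma>)
  case 0 then show ?case by auto
next
  case (Suc n)
  have "(apply_kraus L ^^ Suc n) \<sigma> = (apply_kraus L ^^ n) (apply_kraus L \<sigma>)"
    by (simp only: funpow_Suc_right o_apply)
  then have "Zs ((apply_kraus L ^^ Suc n) \<sigma>) = UNIV \<longleftrightarrow> Rch L n \<subseteq> Zs (apply_kraus L \<sigma>)"
    using Suc.IH[OF apply_kraus_psd[OF Suc.prems]] by simp
  also have "\<dots> \<longleftrightarrow> {adj E *v y | E y. E \<in> set L \<and> y \<in> Rch L n} \<subseteq> Zs \<sigma>"
    using Suc.prems by (auto simp: Zs_apply_kraus)
  also have "\<dots> \<longleftrightarrow> Rch L (Suc n) \<subseteq> Zs \<sigma>" (is "?A \<subseteq> _ \<longleftrightarrow> _")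
  proof
    assume "?A \<subseteq> Zs \<sigma>"
    then show "Rch L (Suc n) \<subseteq> Zs \<sigma>"
      unfolding Rch.simps by (rule vec.span_minimal[OF _ Zs_subspace[OF Suc.prems]])
  next
    assume "Rch L (Suc n) \<subseteq> Zs \<sigma>"
    then show "?A \<subseteq> Zs \<sigma>"
      unfolding Rch.simps using vec.span_superset[of ?A] by (rule subset_trans[rotated])
  qed
  finally show ?case .
qed

lemma nilpotent_stab:
  fixes \<sigma> :: "'n::finite op"
  assumes f: "cp f" and \<sigma>: "psd \<sigma>" and z: "(f ^^ n) \<sigma> = 0"
  shows "(f ^^ CARD('n)) \<sigma> = 0"
proof -
  obtain L where L: "f = apply_kraus L" using f cp_def by blast
  have dim0: "vec.dim (Rch L 0) = CARD('n)" by (simp only: Rch.simps vec_dim_card)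
  have st: "Rch L m = Rch L (CARD('n))" if "m \<ge> CARD('n)" for m
    using chain_stab[of "Rch L" m, OF Rch_subspace Rch_decr] that dim0 by simp
  have "Rch L n \<subseteq> Zs \<sigma>"
    using Rch_key[OF \<sigma>, where L=L and n=n] z L Zs_zero by simp
  moreover have "Rch L (CARD('n)) \<subseteq> Rch L n"
  proof (cases "n \<ge> CARD('n)")
    case True then show ?thesis using st[OF True] by simp
  next
    case False then show ?thesis by (intro Rch_antimono) simp
  qed
  ultimately have "Rch L (CARD('n)) \<subseteq> Zs \<sigma>" by blast
  then have "Zs ((f ^^ CARD('n)) \<sigma>) = UNIV" using Rch_key[OF \<sigma>] L by simp
  then show ?thesis using Zs_UNIV_iff psd_pow[OF f \<sigma>] by blast
qed

lemma card_pos: "0 < CARD('n::finite)" by simp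

lemma Zs_G_le: "psd \<tau> \<Longrightarrow> Zs (Gop Es M1 K \<tau>) \<subseteq> Zs \<tau>"
  for \<tau> :: "'n::finite op"
proof -
  assume t: "psd \<tau>"
  have "Zs (Gop Es M1 K \<tau>) = (\<Inter>i<CARD('n). Zs ((Fsum Es M1 K ^^ i) \<tau>))"
    unfolding Gop_Fsum by (rule Zs_sum) (auto simp: psd_pow cp_Fsum t)
  also have "\<dots> \<subseteq> Zs ((Fsum Es M1 K ^^ 0) \<tau>)" using card_pos[where 'n='n] by blast
  finally show ?thesis by simp
qed

lemma Zs_Fsum_le: "finite K \<Longrightarrow> k \<in> K \<Longrightarrow> psd \<tau> \<Longrightarrow> Zs (Fsum Es M1 K \<tau>) \<subseteq> Zs (Fk Es M1 k \<tau>)"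
  unfolding Fsum_def by (subst Zs_sum) (auto simp: cp_psd cp_Fk)

lemma Zs_G_pow: "psd \<tau> \<Longrightarrow> Zs (Gop Es M1 K \<tau>) \<subseteq> Zs ((Fsum Es M1 K ^^ n) \<tau>)"
  unfolding Gop_Fsum by (rule G_stab[OF cp_Fsum])

lemma Zs_Fk_G: 
  fixes \<sigma> :: "'n::finite op"
  assumes K: "finite K" "k \<in> K" and s: "psd \<sigma>"
  shows "Zs (Gop Es M1 K \<sigma>) \<subseteq> Zs (Fk Es M1 k (Gop Es M1 K \<sigma>))"
proof -
  let ?F = "Fsum Es M1 K"
  have psdG: "psd (Gop Es M1 K \<sigma>)" by (rule cp_psd[OF cp_Gop s])
  have "?F (Gop Es M1 K \<sigma>) = (\<Sum>i<CARD('n). (?F ^^ Suc i) \<sigma>)"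
    unfolding Gop_Fsum by (simp add: cp_sum_apply[OF cp_Fsum])
  then have "Zs (?F (Gop Es M1 K \<sigma>)) = (\<Inter>i<CARD('n). Zs ((?F ^^ Suc i) \<sigma>))"
    by (simp del: funpow.simps) (rule Zs_sum, auto simp: psd_pow cp_Fsum s simp del: funpow.simps)
  also have "Zs (Gop Es M1 K \<sigma>) \<subseteq> \<dots>"
    using Zs_G_pow[OF s] by blast
  finally have "Zs (Gop Es M1 K \<sigma>) \<subseteq> Zs (?F (Gop Es M1 K \<sigma>))" .
  also have "\<dots> \<subseteq> Zs (Fk Es M1 k (Gop Es M1 K \<sigma>))"
    by (rule Zs_Fsum_le[OF K psdG])
  finally show ?thesis .
qed

fun Fw :: "(nat \<Rightarrow> 'n::finite op list) \<Rightarrow> 'n op \<Rightarrow> nat list \<Rightarrow> 'n op \<Rightarrow> 'n op" where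
  "Fw Es M1 [] = id"
| "Fw Es M1 (x # w) = Fw Es M1 w \<circ> Fk Es M1 x"

lemma Fw_append: "Fw Es M1 (u @ v) = Fw Es M1 v \<circ> Fw Es M1 u"
  by (induction u) auto

lemma Fw_snoc: "Fw Es M1 (w @ [x]) = Fk Es M1 x \<circ> Fw Es M1 w"
  by (simp add: Fw_append)

lemma cp_Fw: "cp (Fw Es M1 w)"
proof (induction w)
  case (Cons x w) from cp_comp'[OF Cons cp_Fk] show ?case by (simp add: o_def)
qed (simp add: cp_id)

lemma Fpath_Fw: "Fpath Es M1 s n = Fw Es M1 (map s [0..<n])"
  by (induction n) (auto simp: Fw_snoc)

lemma Fpath_shift: "Fpath Es M1 s (a + b) = Fpath Es M1 (\<lambda>i. s (a + i)) b \<circ> Fpath Es M1 s a"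
  by (induction b) auto

fun fo :: "nat list \<Rightarrow> nat list" where
  "fo [] = []"
| "fo (x # w) = x # filter (\<lambda>y. y \<noteq> x) (fo w)"

lemma set_fo[simp]: "set (fo w) = set w"
  by (induction w) auto

lemma distinct_fo: "distinct (fo w)"
  by (induction w) (auto simp: distinct_filter)

lemma fo_Nil_iff[simp]: "fo w = [] \<longleftrightarrow> w = []"
  by (cases w) auto

lemma fo_snoc: "fo (w @ [x]) = (if x \<in> set w then fo w else fo w @ [x])"
proof (induction w)
  case (Cons y w)
  show ?case
  proof (cases "x = y")
    case True
    then show ?thesis using Cons by (auto simp: filter_empty_conv)
  next
    case False
    then show ?thesis using Cons by auto
  qed
qed simp

lemma Fprime_snoc: "q \<noteq> [] \<Longrightarrow> Fprime Es M1 K (q @ [x]) = Fk Es M1 x \<circ> Gop Es M1 K \<circ> Fprime Es M1 K q"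
proof (induction q rule: induct_list012)
  case (3 y z r)
  then show ?case by (simp add: o_assoc)
qed auto

lemma block_C1:
  fixes \<tau> :: "'n::finite op"
  assumes K: "finite K" and w: "w \<noteq> []" "set w \<subseteq> K"
  shows "psd \<tau> \<Longrightarrow> Zs (Gop Es M1 K (Fprime Es M1 K (fo w) \<tau>)) \<subseteq> Zs (Fw Es M1 w \<tau>)"
  using w
proof (induction w rule: rev_induct)
  case Nil then show ?case by simp
next
  case (snoc x w)
  have t: "psd \<tau>" by fact
  have xK: "x \<in> K" using snoc by auto
  show ?case
  proof (cases "w = []")
    case True
    then show ?thesis using Zs_G_le[OF cp_psd[OF cp_Fk t]] by simp
  next
    case False
    define P where "P = Fprime Es M1 K (fo w) \<tau>"
    have psdP: "psd P" unfolding P_def by (rule cp_psd[OF cp_Fprime t])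
    have IH: "Zs (Gop Es M1 K P) \<subseteq> Zs (Fw Es M1 w \<tau>)"
      using snoc False unfolding P_def by auto
    have m: "Zs (Fk Es M1 x (Gop Es M1 K P)) \<subseteq> Zs (Fk Es M1 x (Fw Es M1 w \<tau>))"
      by (rule cp_Zs_mono[OF cp_Fk cp_psd[OF cp_Gop psdP] cp_psd[OF cp_Fw t] IH])
    show ?thesis
    proof (cases "x \<in> set w")
      case True
      then show ?thesis using Zs_Fk_G[OF K xK psdP, of Es M1] m
        by (simp add: fo_snoc Fw_snoc P_def)
    next
      case xn: False
      have fw: "fo w \<noteq> []" using False by simp
      have "Zs (Gop Es M1 K (Fk Es M1 x (Gop Es M1 K P))) \<subseteq> Zs (Fk Es M1 x (Gop Es M1 K P))"
        by (rule Zs_G_le[OF cp_psd[OF cp_Fk cp_psd[OF cp_Gop psdP]]])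
      then show ?thesis using m xn fw
        by (simp add: fo_snoc Fw_snoc Fprime_snoc P_def)
    qed
  qed
qed

lemma block_C2:
  fixes \<tau> :: "'n::finite op"
  assumes K: "finite K" and w: "set w \<subseteq> K" and x: "x \<notin> set w" "x \<in> K" and t: "psd \<tau>"
  shows "Zs (Fprime Es M1 K (fo (w @ [x])) \<tau>) \<subseteq> Zs (Fw Es M1 (w @ [x]) \<tau>)"
proof (cases "w = []")
  case True then show ?thesis by simp
next
  case False
  define P where "P = Fprime Es M1 K (fo w) \<tau>"
  have psdP: "psd P" unfolding P_def by (rule cp_psd[OF cp_Fprime t])
  have IH: "Zs (Gop Es M1 K P) \<subseteq> Zs (Fw Es M1 w \<tau>)"
    using block_C1[OF K False w t] unfolding P_def by auto
  have m: "Zs (Fk Es M1 x (Gop Es M1 K P)) \<subseteq> Zs (Fk Es M1 x (Fw Es M1 w \<tau>))"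
    by (rule cp_Zs_mono[OF cp_Fk cp_psd[OF cp_Gop psdP] cp_psd[OF cp_Fw t] IH])
  have fw: "fo w \<noteq> []" using False by simp
  then show ?thesis using m x
    by (simp add: fo_snoc Fw_snoc Fprime_snoc P_def)
qed

lemma finite_perms: "finite K \<Longrightarrow> finite (perms K)"
proof -
  assume K: "finite K"
  have "perms K \<subseteq> {xs. set xs \<subseteq> K \<and> length xs \<le> card K}"
    unfolding perms_def using distinct_card by fastforce
  moreover have "finite {xs. set xs \<subseteq> K \<and> length xs \<le> card K}"
    by (rule finite_lists_length_le[OF K])
  ultimately show ?thesis by (rule finite_subset)
qed

lemma Zs_SumFprime_le: "finite K \<Longrightarrow> p \<in> perms K \<Longrightarrow> psd \<tau> \<Longrightarrow>
    Zs (SumFprime Es M1 K \<tau>) \<subseteq> Zs (Fprime Es M1 K p \<tau>)"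
  unfolding SumFprime_def by (subst Zs_sum) (auto simp: finite_perms cp_psd cp_Fprime)

lemma block_path:
  fixes s :: "nat \<Rightarrow> nat"
  assumes K: "finite K" "K \<noteq> {}" and sK: "\<forall>n. s n \<in> K" and occ: "\<forall>k\<in>K. \<exists>n. s n = k"
  shows "\<exists>n\<ge>1. \<forall>\<tau>::'n::finite op. psd \<tau> \<longrightarrow> Zs (SumFprime Es M1 K \<tau>) \<subseteq> Zs (Fpath Es M1 s n \<tau>)"
proof -
  obtain g where g: "\<forall>k\<in>K. s (g k) = k" using occ by metis
  define N where "N = Suc (Max (g ` K))"
  have exN: "K \<subseteq> s ` {..<N}"
  proof
    fix k assume k: "k \<in> K"
    have "g k \<le> Max (g ` K)" using K k by simp
    then have "g k < N" by (simp add: N_def)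
    then show "k \<in> s ` {..<N}" using g k by force
  qed
  define n where "n = (LEAST n. K \<subseteq> s ` {..<n})"
  have n1: "K \<subseteq> s ` {..<n}" unfolding n_def by (rule LeastI[of _ N]) (rule exN)
  have n0: "n \<noteq> 0" using n1 K by auto
  then obtain n' where n': "n = Suc n'" by (cases n) auto
  have nmin: "\<not> K \<subseteq> s ` {..<n'}"
  proof
    assume "K \<subseteq> s ` {..<n'}"
    then have "n \<le> n'" unfolding n_def by (rule Least_le)
    then show False using n' by simp
  qed
  then obtain k where k: "k \<in> K" "k \<notin> s ` {..<n'}" by blast
  then have skn: "s n' = k" using n1 n' by (auto simp: lessThan_Suc)
  define w where "w = map s [0..<n']"
  have wx: "map s [0..<n] = w @ [s n']" by (simp add: w_def n')
  have xw: "s n' \<notin> set w" using k skn by (auto simp: w_def)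
  have wK: "set w \<subseteq> K" using sK by (auto simp: w_def)
  have setwx: "set (w @ [s n']) = K"
  proof
    show "set (w @ [s n']) \<subseteq> K" using wK sK by auto
    show "K \<subseteq> set (w @ [s n'])" using n1 wx by (metis atLeast_upt set_map)
  qed
  have perm: "fo (w @ [s n']) \<in> perms K"
    unfolding perms_def using distinct_fo setwx by simp
  show ?thesis
  proof (intro exI[of _ n] conjI allI impI)
    show "1 \<le> n" using n0 by simp
    fix \<tau> :: "'n op" assume t: "psd \<tau>"
    have "Zs (SumFprime Es M1 K \<tau>) \<subseteq> Zs (Fprime Es M1 K (fo (w @ [s n'])) \<tau>)"
      by (rule Zs_SumFprime_le[OF K(1) perm t])
    also have "\<dots> \<subseteq> Zs (Fw Es M1 (w @ [s n']) \<tau>)"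
      by (rule block_C2[OF K(1) wK xw sK[rule_format] t])
    finally show "Zs (SumFprime Es M1 K \<tau>) \<subseteq> Zs (Fpath Es M1 s n \<tau>)"
      by (simp add: Fpath_Fw wx)
  qed
qed

lemma fair_shift: "s \<in> fair_paths K \<Longrightarrow> (\<lambda>i. s (a + i)) \<in> fair_paths K"
proof -
  assume s: "s \<in> fair_paths K"
  have "infinite {i. s (a + i) = k}" if k: "k \<in> K" for k
  proof -
    have inf: "infinite {n. s n = k}" using s k unfolding fair_paths_def by auto
    show ?thesis unfolding infinite_nat_iff_unbounded_le
    proof
      fix m
      obtain n where "n \<ge> m + a" "s n = k" using inf unfolding infinite_nat_iff_unbounded_le by blast
      then show "\<exists>i\<ge>m. i \<in> {i. s (a + i) = k}" by (intro exI[of _ "n - a"]) auto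
    qed
  qed
  then show ?thesis using s unfolding fair_paths_def by auto
qed

lemma fair_occ: "s \<in> fair_paths K \<Longrightarrow> \<forall>k\<in>K. \<exists>n. s n = k"
  unfolding fair_paths_def by (auto dest!: not_finite_existsD)

lemma dirA_aux:
  fixes \<sigma> :: "'n::finite op"
  assumes K: "finite K" "K \<noteq> {}"
  shows "s \<in> fair_paths K \<Longrightarrow> psd \<sigma> \<Longrightarrow>
     \<exists>n\<ge>j. Zs ((SumFprime Es M1 K ^^ j) \<sigma>) \<subseteq> Zs (Fpath Es M1 s n \<sigma>)"
proof (induction j arbitrary: s \<sigma>)
  case 0 then show ?case by (intro exI[of _ 0]) simp
next
  case (Suc j)
  let ?E = "SumFprime Es M1 K"
  obtain n1 where n1: "n1 \<ge> 1" "\<forall>\<tau>::'n op. psd \<tau> \<longrightarrow> Zs (?E \<tau>) \<subseteq> Zs (Fpath Es M1 s n1 \<tau>)"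
    using block_path[OF K, of s] Suc.prems fair_occ[OF Suc.prems(1)]
    unfolding fair_paths_def by blast
  define s' where "s' = (\<lambda>i. s (n1 + i))"
  define \<sigma>' where "\<sigma>' = Fpath Es M1 s n1 \<sigma>"
  have ps': "psd \<sigma>'" unfolding \<sigma>'_def by (rule cp_psd[OF cp_Fpath Suc.prems(2)])
  obtain n2 where n2: "n2 \<ge> j" "Zs ((?E ^^ j) \<sigma>') \<subseteq> Zs (Fpath Es M1 s' n2 \<sigma>')"
    using Suc.IH[OF fair_shift[OF Suc.prems(1)] ps', of n1] unfolding s'_def by blast
  have "Zs ((?E ^^ Suc j) \<sigma>) = Zs ((?E ^^ j) (?E \<sigma>))"
    by (simp only: funpow_Suc_right o_apply)
  also have "\<dots> \<subseteq> Zs ((?E ^^ j) \<sigma>')"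
    by (rule cp_Zs_mono[OF cp_pow[OF cp_SumFprime] cp_psd[OF cp_SumFprime Suc.prems(2)] ps'])
       (use n1 Suc.prems(2) in \<open>simp add: \<sigma>'_def\<close>)
  also have "\<dots> \<subseteq> Zs (Fpath Es M1 s (n1 + n2) \<sigma>)"
    using n2 by (simp add: Fpath_shift s'_def \<sigma>'_def)
  finally show ?case using n1 n2 by (intro exI[of _ "n1 + n2"]) auto
qed

lemma dirA:
  fixes \<rho>0 :: "'n::finite op"
  assumes K: "finite K" "K \<noteq> {}" and r: "psd \<rho>0"
    and z: "(SumFprime Es M1 K ^^ CARD('n)) \<rho>0 = 0"
  shows "terminates_in Es M1 \<rho>0 (fair_paths K)"
  unfolding terminates_in_def
proof
  fix s assume s: "s \<in> fair_paths K"
  obtain n where n: "n \<ge> CARD('n)" "Zs ((SumFprime Es M1 K ^^ CARD('n)) \<rho>0) \<subseteq> Zs (Fpath Es M1 s n \<rho>0)"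
    using dirA_aux[OF K s r] by blast
  then have "Zs (Fpath Es M1 s n \<rho>0) = UNIV" using z by auto
  then have "Fpath Es M1 s n \<rho>0 = 0" using Zs_UNIV_iff cp_psd[OF cp_Fpath r] by blast
  moreover have "n \<ge> 1" using n(1) card_pos[where 'n='n] by linarith
  ultimately show "\<exists>n\<ge>1. Fpath Es M1 s n \<rho>0 = 0" by blast
qed

definition addv :: "('n::finite op \<Rightarrow> 'n op) \<Rightarrow> bool" where
  "addv h \<longleftrightarrow> (\<forall>X Y. h (X + Y) = h X + h Y)"

lemma addv_zero: "addv h \<Longrightarrow> h 0 = 0"
  unfolding addv_def by (metis add_cancel_right_right add_0)

lemma addv_sum: "addv h \<Longrightarrow> h (\<Sum>i\<in>S. g i) = (\<Sum>i\<in>S. h (g i))"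
  by (induction S rule: infinite_finite_induct) (auto simp: addv_zero, simp add: addv_def)

lemma addv_cp: "cp f \<Longrightarrow> addv f"
  unfolding addv_def by (simp add: cp_add_apply)

lemma addv_comp: "addv h \<Longrightarrow> addv g \<Longrightarrow> addv (h \<circ> g)"
  unfolding addv_def by simp

definition Dec :: "(nat \<Rightarrow> 'n::finite op list) \<Rightarrow> 'n op \<Rightarrow> ('n op \<Rightarrow> 'n op) \<Rightarrow> (nat list \<Rightarrow> bool) \<Rightarrow> bool" where
  "Dec Es M1 f P \<longleftrightarrow> (\<forall>h \<sigma>. addv h \<longrightarrow> h (f \<sigma>) \<noteq> 0 \<longrightarrow> (\<exists>b. P b \<and> h (Fw Es M1 b \<sigma>) \<noteq> 0))"

lemma Dec_Fk: "Dec Es M1 (Fk Es M1 x) (\<lambda>b. b = [x])"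
  unfolding Dec_def by auto

lemma Dec_id: "Dec Es M1 id (\<lambda>b. b = [])"
  unfolding Dec_def by auto

lemma Dec_mono: "Dec Es M1 f P \<Longrightarrow> (\<And>b. P b \<Longrightarrow> Q b) \<Longrightarrow> Dec Es M1 f Q"
  unfolding Dec_def by blast

lemma Dec_sum: "(\<And>i. i \<in> S \<Longrightarrow> Dec Es M1 (f i) P) \<Longrightarrow> Dec Es M1 (\<lambda>\<sigma>. \<Sum>i\<in>S. f i \<sigma>) P"
  unfolding Dec_def
proof (intro allI impI)
  fix h \<sigma> assume D: "\<And>i. i \<in> S \<Longrightarrow> \<forall>h \<sigma>. addv h \<longrightarrow> h (f i \<sigma>) \<noteq> 0 \<longrightarrow> (\<exists>b. P b \<and> h (Fw Es M1 b \<sigma>) \<noteq> 0)"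
    and h: "addv h" and nz: "h (\<Sum>i\<in>S. f i \<sigma>) \<noteq> 0"
  then have "(\<Sum>i\<in>S. h (f i \<sigma>)) \<noteq> 0" by (simp add: addv_sum)
  then obtain i where "i \<in> S" "h (f i \<sigma>) \<noteq> 0" by (meson sum.neutral)
  then show "\<exists>b. P b \<and> h (Fw Es M1 b \<sigma>) \<noteq> 0" using D h by blast
qed

lemma Dec_comp: "Dec Es M1 f P \<Longrightarrow> Dec Es M1 g Q \<Longrightarrow>
   Dec Es M1 (f \<circ> g) (\<lambda>b. \<exists>b1 b2. b = b2 @ b1 \<and> P b1 \<and> Q b2)"
  unfolding Dec_def
proof (intro allI impI)
  fix h \<sigma>
  assume Df: "\<forall>h \<sigma>. addv h \<longrightarrow> h (f \<sigma>) \<noteq> 0 \<longrightarrow> (\<exists>b. P b \<and> h (Fw Es M1 b \<sigma>) \<noteq> 0)"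
    and Dg: "\<forall>h \<sigma>. addv h \<longrightarrow> h (g \<sigma>) \<noteq> 0 \<longrightarrow> (\<exists>b. Q b \<and> h (Fw Es M1 b \<sigma>) \<noteq> 0)"
    and h: "addv h" and nz: "h ((f \<circ> g) \<sigma>) \<noteq> 0"
  obtain b1 where b1: "P b1" "h (Fw Es M1 b1 (g \<sigma>)) \<noteq> 0" using Df h nz by auto
  have h': "addv (h \<circ> Fw Es M1 b1)" by (rule addv_comp[OF h addv_cp[OF cp_Fw]])
  obtain b2 where b2: "Q b2" "(h \<circ> Fw Es M1 b1) (Fw Es M1 b2 \<sigma>) \<noteq> 0"
    using Dg[rule_format, OF h'] b1(2) by (metis comp_apply)
  show "\<exists>b. (\<exists>b1 b2. b = b2 @ b1 \<and> P b1 \<and> Q b2) \<and> h (Fw Es M1 b \<sigma>) \<noteq> 0"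
    using b1 b2 by (intro exI[of _ "b2 @ b1"]) (auto simp: Fw_append)
qed

lemma Dec_Fsum: "Dec Es M1 (Fsum Es M1 K) (\<lambda>b. set b \<subseteq> K)"
  unfolding Fsum_def by (rule Dec_sum, rule Dec_mono[OF Dec_Fk]) auto

lemma Dec_pow: "Dec Es M1 f (\<lambda>b. set b \<subseteq> K) \<Longrightarrow> Dec Es M1 (f ^^ n) (\<lambda>b. set b \<subseteq> K)"
proof (induction n)
  case 0 show ?case by (simp only: funpow.simps) (rule Dec_mono[OF Dec_id], auto)
next
  case (Suc n)
  show ?case by (simp only: funpow.simps) (rule Dec_mono[OF Dec_comp[OF Suc.prems Suc.IH[OF Suc.prems]]], auto)
qed

lemma Dec_G: "Dec Es M1 (Gop Es M1 K) (\<lambda>b. set b \<subseteq> K)"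
proof -
  have "Gop Es M1 K = (\<lambda>\<sigma>. \<Sum>i<CARD('a). (Fsum Es M1 K ^^ i) \<sigma>)"
    by (simp add: Gop_Fsum fun_eq_iff)
  then show ?thesis by (simp add: Dec_sum Dec_pow Dec_Fsum)
qed

lemma Dec_Fprime: "p \<noteq> [] \<Longrightarrow> set p \<subseteq> K \<Longrightarrow>
   Dec Es M1 (Fprime Es M1 K p) (\<lambda>b. set b \<subseteq> K \<and> set p \<subseteq> set b \<and> b \<noteq> [])"
proof (induction Es M1 K p rule: Fprime.induct)
  case (2 Es M1 K x)
  then show ?case by (auto intro: Dec_mono[OF Dec_Fk])
next
  case (3 Es M1 K x y r)
  have IH: "Dec Es M1 (Fprime Es M1 K (y # r)) (\<lambda>b. set b \<subseteq> K \<and> set (y # r) \<subseteq> set b \<and> b \<noteq> [])"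
    using 3 by auto
  have D2: "Dec Es M1 (Gop Es M1 K \<circ> Fk Es M1 x) (\<lambda>b. \<exists>b1 b2. b = b2 @ b1 \<and> set b1 \<subseteq> K \<and> b2 = [x])"
    by (rule Dec_comp[OF Dec_G Dec_Fk])
  have "Dec Es M1 (Fprime Es M1 K (y # r) \<circ> (Gop Es M1 K \<circ> Fk Es M1 x)) 
         (\<lambda>b. set b \<subseteq> K \<and> set (x # y # r) \<subseteq> set b \<and> b \<noteq> [])"
    by (rule Dec_mono[OF Dec_comp[OF IH D2]]) (use 3 in auto)
  then show ?case by (simp add: o_def)
qed simp

lemma Dec_SumFprime: "finite K \<Longrightarrow> K \<noteq> {} \<Longrightarrow>
   Dec Es M1 (SumFprime Es M1 K) (\<lambda>b. set b = K \<and> b \<noteq> [])"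
proof -
  assume K: "finite K" "K \<noteq> {}"
  have "SumFprime Es M1 K = (\<lambda>\<sigma>. \<Sum>p\<in>perms K. Fprime Es M1 K p \<sigma>)"
    by (simp add: SumFprime_def fun_eq_iff)
  moreover have "Dec Es M1 (Fprime Es M1 K p) (\<lambda>b. set b = K \<and> b \<noteq> [])" if p: "p \<in> perms K" for p
  proof (cases "p = []")
    case True
    then show ?thesis using p K unfolding perms_def by auto
  next
    case False
    show ?thesis by (rule Dec_mono[OF Dec_Fprime[OF False]]) (use p in \<open>auto simp: perms_def\<close>)
  qed
  ultimately show ?thesis by (simp add: Dec_sum)
qed

definition blk :: "(nat \<Rightarrow> 'n::finite op list) \<Rightarrow> 'n op \<Rightarrow> nat set \<Rightarrow> 'n op \<Rightarrow> nat list" where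
  "blk Es M1 K \<sigma> = (SOME b. b \<noteq> [] \<and> set b = K \<and> (SumFprime Es M1 K ^^ CARD('n)) (Fw Es M1 b \<sigma>) \<noteq> 0)"

lemma blk_ok:
  fixes \<sigma> :: "'n::finite op"
  assumes K: "finite K" "K \<noteq> {}" and s: "psd \<sigma>" and nz: "(SumFprime Es M1 K ^^ CARD('n)) \<sigma> \<noteq> 0"
  shows "blk Es M1 K \<sigma> \<noteq> [] \<and> set (blk Es M1 K \<sigma>) = K \<and>
         (SumFprime Es M1 K ^^ CARD('n)) (Fw Es M1 (blk Es M1 K \<sigma>) \<sigma>) \<noteq> 0"
proof -
  let ?E = "SumFprime Es M1 K"
  have "(?E ^^ CARD('n)) (?E \<sigma>) \<noteq> 0"
  proof
    assume "(?E ^^ CARD('n)) (?E \<sigma>) = 0"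
    then have "(?E ^^ Suc (CARD('n))) \<sigma> = 0" by (simp only: funpow_Suc_right o_apply)
    then have "(?E ^^ CARD('n)) \<sigma> = 0" by (rule nilpotent_stab[OF cp_SumFprime s])
    with nz show False by simp
  qed
  then have "\<exists>b. b \<noteq> [] \<and> set b = K \<and> (?E ^^ CARD('n)) (Fw Es M1 b \<sigma>) \<noteq> 0"
    using Dec_SumFprime[OF K, of Es M1] addv_cp[OF cp_pow[OF cp_SumFprime]] unfolding Dec_def by blast
  then show ?thesis unfolding blk_def by (rule someI_ex)
qed

primrec cfg :: "(nat \<Rightarrow> 'n::finite op list) \<Rightarrow> 'n op \<Rightarrow> nat set \<Rightarrow> 'n op \<Rightarrow> nat \<Rightarrow> 'n op \<times> nat list" where
  "cfg Es M1 K \<rho>0 0 = (\<rho>0, blk Es M1 K \<rho>0)"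
| "cfg Es M1 K \<rho>0 (Suc n) =
     (let \<sigma>' = Fk Es M1 (hd (snd (cfg Es M1 K \<rho>0 n))) (fst (cfg Es M1 K \<rho>0 n));
          c' = tl (snd (cfg Es M1 K \<rho>0 n))
      in if c' = [] then (\<sigma>', blk Es M1 K \<sigma>') else (\<sigma>', c'))"

lemma dirB:
  fixes \<rho>0 :: "'n::finite op"
  assumes K: "finite K" "K \<noteq> {}" and r: "psd \<rho>0"
    and nz: "(SumFprime Es M1 K ^^ CARD('n)) \<rho>0 \<noteq> 0"
  shows "\<not> terminates_in Es M1 \<rho>0 (fair_paths K)"
proof -
  let ?E = "SumFprime Es M1 K"
  let ?h = "?E ^^ CARD('n)"
  let ?c = "cfg Es M1 K \<rho>0"
  define s where "s n = hd (snd (?c n))" for n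
  have h0: "?h 0 = 0" by (rule cp_pow_zero[OF cp_SumFprime])
  have inv: "psd (fst (?c n)) \<and> snd (?c n) \<noteq> [] \<and> set (snd (?c n)) \<subseteq> K \<and>
             ?h (Fw Es M1 (snd (?c n)) (fst (?c n))) \<noteq> 0" for n
  proof (induction n)
    case 0 then show ?case using blk_ok[OF K r nz] r by simp
  next
    case (Suc n)
    obtain \<sigma> c where c: "?c n = (\<sigma>, c)" by (cases "?c n")
    with Suc obtain x c' where xc: "c = x # c'" by (cases c) auto
    have ps: "psd \<sigma>" using Suc c by simp
    have ps': "psd (Fk Es M1 x \<sigma>)" by (rule cp_psd[OF cp_Fk ps])
    have nz': "?h (Fw Es M1 c' (Fk Es M1 x \<sigma>)) \<noteq> 0" using Suc c xc by simp
    show ?case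
    proof (cases "c' = []")
      case True
      then show ?thesis using blk_ok[OF K ps' ] nz' c xc ps' by (simp add: Let_def)
    next
      case False
      then show ?thesis using Suc c xc ps' nz' by (auto simp: Let_def)
    qed
  qed
  have fstc: "fst (?c n) = Fpath Es M1 s n \<rho>0" for n
    by (induction n) (auto simp: Let_def s_def)
  have nonz: "Fpath Es M1 s n \<rho>0 \<noteq> 0" for n
  proof
    assume "Fpath Es M1 s n \<rho>0 = 0"
    then have "fst (?c n) = 0" by (simp add: fstc)
    then show False using inv[of n] h0 cp_zero_apply[OF cp_Fw] by metis
  qed
  have sK: "s n \<in> K" for n
    using inv[of n] unfolding s_def by (metis hd_in_set subsetD)
  have dropc: "i < length (snd (?c n)) \<Longrightarrow> snd (?c (n + i)) = drop i (snd (?c n))" for i n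
  proof (induction i)
    case (Suc i)
    then have "snd (?c (n + i)) = drop i (snd (?c n))" by simp
    moreover have "tl (drop i (snd (?c n))) = drop (Suc i) (snd (?c n))" by (simp add: drop_Suc tl_drop)
    moreover have "drop (Suc i) (snd (?c n)) \<noteq> []" using Suc.prems by simp
    ultimately show ?case by (simp add: Let_def)
  qed simp
  have fresh: "set (snd (?c (Suc n))) = K" if tl0: "tl (snd (?c n)) = []" for n
  proof -
    obtain \<sigma> c where c: "?c n = (\<sigma>, c)" by (cases "?c n")
    with inv[of n] tl0 obtain x where xc: "c = [x]" by (cases c) auto
    have ps': "psd (Fk Es M1 x \<sigma>)" by (rule cp_psd[OF cp_Fk]) (use inv[of n] c in simp)
    have nz': "?h (Fk Es M1 x \<sigma>) \<noteq> 0" using inv[of n] c xc by simp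
    show ?thesis using blk_ok[OF K ps' nz'] c xc by (simp add: Let_def)
  qed
  have recur: "\<exists>n\<ge>N. set (snd (?c n)) = K" for N
  proof -
    define c where "c = snd (?c N)"
    have cne: "c \<noteq> []" using inv[of N] c_def by simp
    define j where "j = length c - 1"
    have jl: "j < length c" using cne j_def by simp
    have "snd (?c (N + j)) = drop j c" using dropc[of j N] jl c_def by simp
    moreover have "tl (drop j c) = []" using jl j_def by (simp add: tl_drop drop_Suc[symmetric])
    ultimately have "tl (snd (?c (N + j))) = []" by simp
    then have "set (snd (?c (Suc (N + j)))) = K" by (rule fresh)
    then show ?thesis by (intro exI[of _ "Suc (N + j)"]) simp
  qed
  have occ: "infinite {n. s n = k}" if k: "k \<in> K" for k
    unfolding infinite_nat_iff_unbounded_le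
  proof
    fix N
    obtain n where n: "n \<ge> N" "set (snd (?c n)) = K" using recur by blast
    then obtain i where i: "i < length (snd (?c n))" "snd (?c n) ! i = k"
      using k by (metis in_set_conv_nth)
    have "s (n + i) = k" using dropc[OF i(1)] i unfolding s_def by (simp add: hd_drop_conv_nth)
    then show "\<exists>m\<ge>N. m \<in> {n. s n = k}" using n by (intro exI[of _ "n + i"]) auto
  qed
  have "s \<in> fair_paths K" unfolding fair_paths_def using sK occ by auto
  then show ?thesis unfolding terminates_in_def using nonz by blast
qed

definition vecm :: "'n::finite op \<Rightarrow> complex^('n \<times> 'n)" where
  "vecm X = (\<chi> ij. X $ fst ij $ snd ij)"

lemma sum_pairs: "(\<Sum>kl\<in>(UNIV::('a::finite \<times> 'b::finite) set). f kl) = (\<Sum>k\<in>UNIV. \<Sum>l\<in>UNIV. f (k, l))"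
  by (simp add: sum.cartesian_product UNIV_Times_UNIV[symmetric] del: UNIV_Times_UNIV)

lemma kron_Phi: "kron X (mat 1) *v Phi = vecm X"
proof -
  have "(kron X (mat 1) *v Phi) $ (i, j) = X $ i $ j" for i j
  proof -
    have "(kron X (mat 1) *v Phi) $ (i, j) = (\<Sum>k\<in>UNIV. \<Sum>l\<in>UNIV. X $ i $ k * (mat 1 :: 'a op) $ j $ l * (if k = l then 1 else 0))"
      by (simp add: matrix_vector_mult_def kron_def Phi_def sum_pairs)
    also have "\<dots> = (\<Sum>k\<in>UNIV. if k = j then X $ i $ j else 0)"
    proof (rule sum.cong)
      fix k
      have "(\<Sum>l\<in>UNIV. X $ i $ k * (mat 1 :: 'a op) $ j $ l * (if k = l then 1 else 0))
          = (\<Sum>l\<in>UNIV. if l = k then X $ i $ k * (mat 1 :: 'a op) $ j $ k else 0)"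
        by (rule sum.cong) auto
      also have "\<dots> = (if k = j then X $ i $ j else 0)" by (simp add: mat_def)
      finally show "(\<Sum>l\<in>UNIV. X $ i $ k * (mat 1 :: 'a op) $ j $ l * (if k = l then 1 else 0)) = (if k = j then X $ i $ j else 0)" .
    qed simp
    finally show ?thesis by simp
  qed
  then show ?thesis by (simp add: vec_eq_iff vecm_def)
qed

lemma vecm_eq_0: "vecm X = 0 \<longleftrightarrow> X = 0"
  by (auto simp: vecm_def vec_eq_iff)

lemma vecm_add: "vecm (X + Y) = vecm X + vecm Y"
  by (simp add: vecm_def vec_eq_iff)

lemma vecm_zero: "vecm 0 = 0"
  by (simp add: vecm_def vec_eq_iff)

lemma kron_vecm: "kron A (conj_mat A) *v vecm X = vecm (A ** X ** adj A)"
proof -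
  have "(kron A (conj_mat A) *v vecm X) $ (i, j) = (A ** X ** adj A) $ i $ j" for i j
  proof -
    have "(kron A (conj_mat A) *v vecm X) $ (i, j) = (\<Sum>k\<in>UNIV. \<Sum>l\<in>UNIV. A $ i $ k * cnj (A $ j $ l) * X $ k $ l)"
      by (simp add: matrix_vector_mult_def kron_def vecm_def conj_mat_def sum_pairs)
    also have "\<dots> = (\<Sum>l\<in>UNIV. \<Sum>k\<in>UNIV. A $ i $ k * cnj (A $ j $ l) * X $ k $ l)"
      by (rule sum.swap)
    also have "\<dots> = (A ** X ** adj A) $ i $ j"
      by (simp add: matrix_matrix_mult_def adj_def sum_distrib_right sum_distrib_left mult_ac)
    finally show ?thesis .
  qed
  then show ?thesis by (simp add: vec_eq_iff vecm_def)
qed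

lemma matrep_vecm: "matrep L *v vecm X = vecm (apply_kraus L X)"
proof (induction L)
  case Nil then show ?case by (simp add: matrep_def vecm_zero apply_kraus_def)
next
  case (Cons A L)
  then show ?case
    by (simp add: matrep_def apply_kraus_def matrix_vector_mult_add_rdistrib kron_vecm vecm_add)
qed

lemma sum_mat_vec: "(\<Sum>p\<in>S. A p) *v v = (\<Sum>p\<in>S. A p *v v)"
  by (induction S rule: infinite_finite_induct) (auto simp: matrix_vector_mult_add_rdistrib)

lemma vecm_sum: "vecm (\<Sum>p\<in>S. f p) = (\<Sum>p\<in>S. vecm (f p))"
  by (induction S rule: infinite_finite_induct) (auto simp: vecm_add vecm_zero)

lemma matpow_vec: "matpow A n *v v = ((\<lambda>v. A *v v) ^^ n) v"
  by (induction n) (auto simp: matrix_vector_mul_assoc[symmetric])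

lemma apply_kraus_pow: "apply_kraus (kraus_pow A i) = (apply_kraus A) ^^ i"
  by (induction i) (auto simp: fun_eq_iff apply_kraus_comp)

lemma apply_kraus_Fcat: "distinct ks \<Longrightarrow> apply_kraus (concat (map (kraus_F Es M1) ks)) X = Fsum Es M1 (set ks) X"
  by (simp add: apply_kraus_concat o_def apply_kraus_F Fsum_def sum_list_distinct_conv_sum_set)

lemma apply_kraus_G: "distinct ks \<Longrightarrow> apply_kraus (kraus_G Es M1 ks) X = Gop Es M1 (set ks) X"
  for X :: "'n::finite op"
proof -
  assume d: "distinct ks"
  have fe: "apply_kraus (concat (map (kraus_F Es M1) ks)) = Fsum Es M1 (set ks)"
    by (rule ext) (rule apply_kraus_Fcat[OF d])
  have "apply_kraus (kraus_G Es M1 ks) X = (\<Sum>i\<leftarrow>[0..<CARD('n)]. (Fsum Es M1 (set ks) ^^ i) X)"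
    unfolding kraus_G_def apply_kraus_concat
    by (simp add: o_def apply_kraus_pow fe)
  also have "\<dots> = Gop Es M1 (set ks) X"
    by (simp add: Gop_Fsum interv_sum_list_conv_sum_set_nat lessThan_atLeast0)
  finally show ?thesis .
qed

lemma apply_kraus_Fprime: "distinct ks \<Longrightarrow> apply_kraus (kraus_Fprime Es M1 ks p) X = Fprime Es M1 (set ks) p X"
proof (induction Es M1 ks p arbitrary: X rule: kraus_Fprime.induct)
  case (3 Es M1 ks x y r)
  then show ?case by (simp add: apply_kraus_comp apply_kraus_G apply_kraus_F)
qed (auto simp: apply_kraus_F)

lemma Mrep_vecm: "Mrep Es M1 m *v vecm X = vecm (SumFprime Es M1 {1..m} X)"
proof -
  have ks: "distinct [1..<m+1]" "set [1..<m+1] = {1..m}" by auto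
  have "\<And>p. apply_kraus (kraus_Fprime Es M1 [1..<m+1] p) X = Fprime Es M1 {1..m} p X"
    using apply_kraus_Fprime[OF ks(1)] ks(2) by metis
  then show ?thesis
    unfolding Mrep_def SumFprime_def sum_mat_vec matrep_vecm vecm_sum by (simp only:)
qed

lemma matpow_Mrep: "matpow (Mrep Es M1 m) n *v vecm X = vecm ((SumFprime Es M1 {1..m} ^^ n) X)"
proof (induction n)
  case 0 then show ?case by simp
next
  case (Suc n)
  have "matpow (Mrep Es M1 m) (Suc n) *v vecm X = Mrep Es M1 m *v (matpow (Mrep Es M1 m) n *v vecm X)"
    by (simp add: matrix_vector_mul_assoc)
  then show ?case using Suc by (simp add: Mrep_vecm)
qed

lemma density_psd: "density_op \<rho> \<Longrightarrow> psd \<rho>"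
proof -
  assume d: "density_op \<rho>"
  have "qf \<rho> v = (\<Sum>i\<in>UNIV. \<Sum>j\<in>UNIV. cnj (v $ i) * \<rho> $ i $ j * v $ j)" for v
    by (simp add: qf_def cinner_def matrix_vector_mult_def sum_distrib_left mult.assoc)
  note q = this
  show ?thesis unfolding psd_def
  proof
    fix v
    obtain r where "r \<ge> 0" "(\<Sum>i\<in>UNIV. \<Sum>j\<in>UNIV. cnj (v $ i) * \<rho> $ i $ j * v $ j) = complex_of_real r"
      using d unfolding density_op_def by blast
    then show "Im (qf \<rho> v) = 0 \<and> Re (qf \<rho> v) \<ge> 0" using q[of v] by simp
  qed
qed


theorem mainTheorem8:
  fixes Es :: "nat \<Rightarrow> ('n::finite) op list"
    and M0 M1 :: "'n op"
    and \<rho>0 :: "'n op"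
    and m :: nat
  assumes m_pos: "m \<ge> 1"
    and tp: "\<forall>k\<in>{1..m}. trace_preserving (Es k)"
    and meas: "adj M0 ** M0 + adj M1 ** M1 = mat 1"
    and dens: "density_op \<rho>0"
  shows "(terminates_in Es M1 \<rho>0 (fair_paths {1..m}) \<longleftrightarrow>
            matpow (Mrep Es M1 m) CARD('n) *v (kron \<rho>0 (mat 1) *v Phi) = 0)
       \<and> (terminates_in Es M1 \<rho>0 (fair_paths {1..m}) \<longleftrightarrow>
            (SumFprime Es M1 {1..m} ^^ CARD('n)) \<rho>0 = 0)"
proof -
  have K: "finite {1..m}" "{1..m} \<noteq> {}" using m_pos by auto
  have r: "psd \<rho>0" by (rule density_psd[OF dens])
  have key: "terminates_in Es M1 \<rho>0 (fair_paths {1..m}) \<longleftrightarrow>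
            (SumFprime Es M1 {1..m} ^^ CARD('n)) \<rho>0 = 0"
    using dirA[OF K r] dirB[OF K r] by blast
  have "matpow (Mrep Es M1 m) CARD('n) *v (kron \<rho>0 (mat 1) *v Phi)
        = vecm ((SumFprime Es M1 {1..m} ^^ CARD('n)) \<rho>0)"
    by (simp add: kron_Phi matpow_Mrep)
  then show ?thesis using key vecm_eq_0 by metis
qed

end
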